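(* Let $\mathcal{T}$ be a teacher class over $\mathcal{X},\mathcal{Y},\Phi$ and $H$ a non-empty history consistent with $\mathcal{T}$, and let $N$ be the number of labels $y\in\mathcal{Y}$ that do not appear in any pair of $H$. Then \[\mathrm{Ldim}(\mathrm{DtO}(\mathcal{T},H))\geq\mathrm{DFFdim}(\mathcal{T},H)-N.\]
   Context: Setting. A teacher over $\mathcal{X},\mathcal{Y},\Phi$ ($\mathcal{Y}$ finite, $\Phi$ a set of Boolean features on $\mathcal{X}$, $\bot$ a null symbol) is a pair $T=(\ell,\psi)$ with $\ell:\mathcal{X}\to\mathcal{Y}$ and $\psi:\mathcal{X}\times\mathcal{X}\to\Phi\cup\{\bot\}$ such that whenever $\ell(x)\neq\ell(\hat x)$, $\phi:=\psi(x,\hat x)\in\Phi$, $\phi(x)=1$ and $\phi(\hat x)=0$. A teacher class is a set of teachers. A history is a non-empty set $H\subseteq\mathcal{X}\times\mathcal{Y}$, $H_{\mathcal{X}}=\{x:\exists y,(x,y)\in H\}$; a teacher $(\ell,\psi)$ is consistent with $H$ if $\ell(x)=y$ for all $(x,y)\in H$; $\mathcal{T}_H$ is the set of teachers in $\mathcal{T}$ consistent with $H$, and $\mathcal{T}$ is consistent with $H$ if $\mathcal{T}_H\neq\emptyset$. DFF dimension. A DFF tree is a rooted tree whose nodes are triples $\langle y,\phi,x\rangle$ with $y\in\mathcal{Y}\cup\{\bot\}$, $\phi\in\Phi\cup\{\bot\}$, $x\in\mathcal{X}\cup\{\bot\}$, such that the root has $y=\phi=\bot$, a node has $x=\bot$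 iff it is a leaf, every edge is labeled by a pair $(\hat x,\hat y)\in\mathcal{X}\times\mathcal{Y}$, and every non-root node $\langle y,\phi,x\rangle$ with incoming edge $(\hat x,\hat y)$ has $\phi\neq\bot$ whenever $y\neq\hat y$. For a parent–child pair $\langle\cdot,\cdot,x\rangle\xrightarrow{(\hat x,\hat y)}\langle y,\phi,\cdot\rangle$ on a path, $(x,y)$ is called a labeled example in that path. A path from the root is consistent with a teacher $(\ell,\psi)$ if for every such parent–child pair on it, $\ell(x)=y$ and, if $y\neq\hat y$, $\psi(x,\hat x)=\phi$. Given $\mathcal{T}$ consistent with $H$, a DFF tree is shattered by $\mathcal{T}$ and $H$ if: (1) every non-root node $\langle y,\phi,x\rangle$ with incoming edge $(\hat x,\hat y)$ has $y\neq\hat y$; (2) the labels of the outgoing edges of each non-leaf node $v$ are exactly the pairs that belong to $H$ or are labeled examples in the path from the root to $v$; (3) every root-to-leaf path is consistent with some teacher in $\mathcal{T}_H$; (4) all root-to-leaf paths have the same number of edges, called the height. $\mathrm{DFFdim}(\mathcal{T},H)$ is the maximal height of a DFF tree shattered by $\mathcal{T}$ and $H$. $\mathrm{Ldim}$ is the (multiclass) Littlestone dimension: the maximal depth of a complete binary tree whose internal nodes are labeled by examples and whose two outgoing edges at each internal node are labeled by two distinct labels, such that for every root-to-leaf path some function in the class agrees with all (example, edge label) pairs on the path. Mapping DtO: given $\mathcal{T}$ and $H$, let $\mathcal{X}''=\mathcal{X}\setminus H_{\mathcal{X}}$; then $\mathrm{DtO}(\mathcal{T},H)=\{\ell|_{\mathcal{X}''}:(\ell,\psi)\in\mathcal{T}\}$.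 *)

theory Defs
  imports Main "HOL-Library.Extended_Nat" "HOL-Library.FuncSet"
begin

text \<open>Conventions: the instance space X is the type 'x, the label set Y is the
  finite type 'y, Boolean features are predicates 'x \<Rightarrow> bool, and the null
  symbol \<bottom> is modelled by None of the option type.\<close>

type_synonym ('x,'y) teacher = "('x \<Rightarrow> 'y) \<times> ('x \<Rightarrow> 'x \<Rightarrow> ('x \<Rightarrow> bool) option)"

definition is_teacher :: "('x \<Rightarrow> bool) set \<Rightarrow> ('x,'y) teacher \<Rightarrow> bool" where
  "is_teacher \<Phi> T \<longleftrightarrow>
     (\<forall>x x' \<phi>. snd T x x' = Some \<phi> \<longrightarrow> \<phi> \<in> \<Phi>) \<and>
     (\<forall>x x'. fst T x \<noteq> fst T x' \<longrightarrow>
        (\<exists>\<phi>. snd T x x' = Some \<phi> \<and> \<phi> \<in> \<Phi> \<and> \<phi> x \<and> \<not> \<phi> x'))"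

definition teacher_class :: "('x \<Rightarrow> bool) set \<Rightarrow> ('x,'y) teacher set \<Rightarrow> bool" where
  "teacher_class \<Phi> TT \<longleftrightarrow> (\<forall>T\<in>TT. is_teacher \<Phi> T)"

definition consistent_with :: "('x,'y) teacher \<Rightarrow> ('x \<times> 'y) set \<Rightarrow> bool" where
  "consistent_with T H \<longleftrightarrow> (\<forall>(x,y)\<in>H. fst T x = y)"

definition TH :: "('x,'y) teacher set \<Rightarrow> ('x \<times> 'y) set \<Rightarrow> ('x,'y) teacher set" where
  "TH TT H = {T \<in> TT. consistent_with T H}"

definition hist_X :: "('x \<times> 'y) set \<Rightarrow> 'x set" where
  "hist_X H = fst ` H"

text \<open>A node is a triple (y, phi, x); its outgoing edges are indexed by their labels
  (pairs in X \<times> Y), the child along edge e being given by the partial map.\<close>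

datatype ('x,'y) dff =
  DNode "'y option" "('x \<Rightarrow> bool) option" "'x option" "'x \<times> 'y \<Rightarrow> ('x,'y) dff option"

text \<open>A walk from a node records, for each edge: the parent's x, the edge label,
  and the child's y and phi.\<close>

inductive dff_walk ::
  "('x,'y) dff \<Rightarrow> ('x option \<times> ('x \<times> 'y) \<times> 'y option \<times> ('x \<Rightarrow> bool) option) list
     \<Rightarrow> ('x,'y) dff \<Rightarrow> bool" where
  walk_nil: "dff_walk t [] t"
| walk_cons: "c e = Some (DNode y' f' x' c') \<Longrightarrow> dff_walk (DNode y' f' x' c') ws s
     \<Longrightarrow> dff_walk (DNode y f x c) ((x, e, y', f') # ws) s"

definition dff_is_leaf :: "('x,'y) dff \<Rightarrow> bool" where
  "dff_is_leaf t \<longleftrightarrow> (case t of DNode y f x c \<Rightarrow> (\<forall>e. c e = None))"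

definition dff_tree :: "('x,'y) dff \<Rightarrow> bool" where
  "dff_tree t \<longleftrightarrow>
     (\<exists>x c. t = DNode None None x c) \<and>
     (\<forall>ws y f x c. dff_walk t ws (DNode y f x c) \<longrightarrow> (x = None \<longleftrightarrow> (\<forall>e. c e = None))) \<and>
     (\<forall>ws s. dff_walk t ws s \<longrightarrow>
        (\<forall>(xp, (xh, yh), y, f) \<in> set ws. y \<noteq> Some yh \<longrightarrow> f \<noteq> None))"

text \<open>Labeled examples (x, y) in a path: x of the parent, y of the child.\<close>

definition lab_ex ::
  "('x option \<times> ('x \<times> 'y) \<times> 'y option \<times> ('x \<Rightarrow> bool) option) list \<Rightarrow> ('x option \<times> 'y option) set" where
  "lab_ex ws = (\<lambda>(xp, e, y, f). (xp, y)) ` set ws"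

definition dff_shattered :: "('x,'y) teacher set \<Rightarrow> ('x \<times> 'y) set \<Rightarrow> ('x,'y) dff \<Rightarrow> nat \<Rightarrow> bool" where
  "dff_shattered TT H t h \<longleftrightarrow>
     dff_tree t \<and>
     \<comment> \<open>(1)\<close>
     (\<forall>ws s. dff_walk t ws s \<longrightarrow> (\<forall>(xp, (xh, yh), y, f) \<in> set ws. y \<noteq> Some yh)) \<and>
     \<comment> \<open>(2)\<close>
     (\<forall>ws y f x c. dff_walk t ws (DNode y f x c) \<and> \<not> dff_is_leaf (DNode y f x c) \<longrightarrow>
        (\<lambda>(a,b). (Some a, Some b)) ` {e. c e \<noteq> None}
          = (\<lambda>(a,b). (Some a, Some b)) ` H \<union> lab_ex ws) \<and>
     \<comment> \<open>(3)\<close>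
     (\<forall>ws s. dff_walk t ws s \<and> dff_is_leaf s \<longrightarrow>
        (\<exists>(l, \<psi>) \<in> TH TT H. \<forall>(xp, (xh, yh), y, f) \<in> set ws.
            \<exists>a. xp = Some a \<and> y = Some (l a) \<and> (y \<noteq> Some yh \<longrightarrow> \<psi> a xh = f))) \<and>
     \<comment> \<open>(4)\<close>
     (\<forall>ws s. dff_walk t ws s \<and> dff_is_leaf s \<longrightarrow> length ws = h)"

definition DFFdim :: "('x,'y) teacher set \<Rightarrow> ('x \<times> 'y) set \<Rightarrow> enat" where
  "DFFdim TT H = Sup {enat h | h. \<exists>t. dff_shattered TT H t h}"

datatype ('x,'y) ltree = LLeaf | LNode 'x 'y "('x,'y) ltree" 'y "('x,'y) ltree"

fun lt_ok :: "'x set \<Rightarrow> ('x,'y) ltree \<Rightarrow> nat \<Rightarrow> bool" where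
  "lt_ok D LLeaf d \<longleftrightarrow> d = 0"
| "lt_ok D (LNode x y1 l y2 r) d \<longleftrightarrow>
     (\<exists>d'. d = Suc d' \<and> x \<in> D \<and> y1 \<noteq> y2 \<and> lt_ok D l d' \<and> lt_ok D r d')"

fun lt_paths :: "('x,'y) ltree \<Rightarrow> ('x \<times> 'y) list set" where
  "lt_paths LLeaf = {[]}"
| "lt_paths (LNode x y1 l y2 r) = (#) (x, y1) ` lt_paths l \<union> (#) (x, y2) ` lt_paths r"

definition lt_shattered :: "'x set \<Rightarrow> ('x \<Rightarrow> 'y) set \<Rightarrow> ('x,'y) ltree \<Rightarrow> nat \<Rightarrow> bool" where
  "lt_shattered D F t d \<longleftrightarrow> lt_ok D t d \<and> (\<forall>p \<in> lt_paths t. \<exists>f\<in>F. \<forall>(x,y)\<in>set p. f x = y)"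

definition Ldim :: "'x set \<Rightarrow> ('x \<Rightarrow> 'y) set \<Rightarrow> enat" where
  "Ldim D F = Sup {enat d | d. \<exists>t. lt_shattered D F t d}"

definition DtO_dom :: "('x \<times> 'y) set \<Rightarrow> 'x set" where
  "DtO_dom H = UNIV - hist_X H"

definition DtO :: "('x,'y) teacher set \<Rightarrow> ('x \<times> 'y) set \<Rightarrow> ('x \<Rightarrow> 'y) set" where
  "DtO TT H = (\<lambda>T. restrict (fst T) (DtO_dom H)) ` TT"

end

theory Submission
  imports Defs
begin

fun ylab :: "('x,'y) dff \<Rightarrow> 'y option" where "ylab (DNode y f x c) = y"

definition prs :: "('x option \<times> ('x \<times> 'y) \<times> 'y option \<times> ('x \<Rightarrow> bool) option) list \<Rightarrow> ('x \<times> 'y) set" where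
  "prs ws = {(a,b). (Some a, Some b) \<in> lab_ex ws}"

definition frsh :: "('x \<times> 'y) set \<Rightarrow> ('x option \<times> ('x \<times> 'y) \<times> 'y option \<times> ('x \<Rightarrow> bool) option) list \<Rightarrow> 'y set" where
  "frsh H ws = {b. (\<forall>a. (a,b) \<notin> H) \<and> (\<forall>a. (Some a, Some b) \<notin> lab_ex ws)}"

lemma walk_app: "dff_walk t ws s \<Longrightarrow> dff_walk s ws' u \<Longrightarrow> dff_walk t (ws@ws') u"
  by (induction rule: dff_walk.induct) (auto intro: dff_walk.intros)

lemma walk_snoc: "dff_walk t ws (DNode y f x c) \<Longrightarrow> c e = Some (DNode y' f' x' c') \<Longrightarrow>
   dff_walk t (ws @ [(x,e,y',f')]) (DNode y' f' x' c')"
  by (erule walk_app) (auto intro: dff_walk.intros)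

lemma leaf_exists: "\<exists>ws u. dff_walk s ws u \<and> dff_is_leaf u"
proof (induction s)
  case (DNode y f x c)
  show ?case
  proof (cases "\<forall>e. c e = None")
    case True
    then show ?thesis by (intro exI[of _ "[]"] exI[of _ "DNode y f x c"]) (auto simp: dff_is_leaf_def intro: dff_walk.intros)
  next
    case False
    then obtain e ch where ce: "c e = Some ch" by auto
    obtain y' f' x' c' where ch: "ch = DNode y' f' x' c'" by (cases ch)
    from DNode[of "c e" ch] ce rangeI[of c e] obtain ws u where "dff_walk ch ws u" "dff_is_leaf u" by auto
    then have "dff_walk (DNode y f x c) ((x, e, y', f') # ws) u \<and> dff_is_leaf u"
      using ce ch by (simp add: dff_walk.walk_cons)
    then show ?thesis by blast
  qed
qed

lemma shD1: "dff_shattered TT H t h \<Longrightarrow> dff_tree t"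
  unfolding dff_shattered_def by (rule conjunct1)
lemma shD2: "dff_shattered TT H t h \<Longrightarrow> dff_walk t ws s \<Longrightarrow> z \<in> set ws \<Longrightarrow>
  (\<lambda>(xp, (xh, yh), y, f). y \<noteq> Some yh) z"
  unfolding dff_shattered_def
  apply (drule conjunct2, drule conjunct1)
  apply (drule spec, drule spec, drule mp, assumption)
  apply (erule bspec, assumption)
  done
lemma shD3: "dff_shattered TT H t h \<Longrightarrow> dff_walk t ws (DNode y f x c) \<Longrightarrow> \<not> dff_is_leaf (DNode y f x c) \<Longrightarrow>
        (\<lambda>(a,b). (Some a, Some b)) ` {e. c e \<noteq> None}
          = (\<lambda>(a,b). (Some a, Some b)) ` H \<union> lab_ex ws"
  unfolding dff_shattered_def
  apply (drule conjunct2, drule conjunct2, drule conjunct1)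
  apply (drule spec, drule spec, drule spec, drule spec, drule spec, drule mp, rule conjI, assumption, assumption, assumption)
  done
lemma shD4: "dff_shattered TT H t h \<Longrightarrow> dff_walk t ws s \<Longrightarrow> dff_is_leaf s \<Longrightarrow>
        (\<exists>(l, \<psi>) \<in> TH TT H. \<forall>(xp, (xh, yh), y, f) \<in> set ws.
            \<exists>a. xp = Some a \<and> y = Some (l a) \<and> (y \<noteq> Some yh \<longrightarrow> \<psi> a xh = f))"
  unfolding dff_shattered_def
  apply (drule conjunct2, drule conjunct2, drule conjunct2, drule conjunct1)
  apply (drule spec, drule spec, drule mp, rule conjI, assumption, assumption, assumption)
  done
lemma shD5: "dff_shattered TT H t h \<Longrightarrow> dff_walk t ws s \<Longrightarrow> dff_is_leaf s \<Longrightarrow> length ws = h"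
  unfolding dff_shattered_def
  apply (drule conjunct2, drule conjunct2, drule conjunct2, drule conjunct2)
  apply (drule spec, drule spec, drule mp, rule conjI, assumption, assumption, assumption)
  done

lemma child_label:
  assumes sh: "dff_shattered TT H t h"
    and w: "dff_walk t ws (DNode y f (Some x) c)" and ce: "c e = Some (DNode y' f' x' c')"
  shows "\<exists>l \<psi>. (l,\<psi>) \<in> TH TT H \<and> y' = Some (l x) \<and> y' \<noteq> Some (snd e)"
proof -
  obtain ws'' u where w2: "dff_walk (DNode y' f' x' c') ws'' u" "dff_is_leaf u" using leaf_exists by blast
  have w1: "dff_walk t (ws @ [(Some x, e, y', f')]) (DNode y' f' x' c')" using walk_snoc[OF w ce] .
  have w3: "dff_walk t ((ws @ [(Some x, e, y', f')]) @ ws'') u" using walk_app[OF w1 w2(1)] .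
  obtain xe ye where e: "e = (xe, ye)" by (cases e)
  have in1: "(Some x, e, y', f') \<in> set ((ws @ [(Some x, e, y', f')]) @ ws'')" by simp
  obtain l \<psi> where lp: "(l,\<psi>) \<in> TH TT H" and
    all: "\<forall>(xp, (xh, yh), y, f) \<in> set ((ws @ [(Some x, e, y', f')]) @ ws''). 
            \<exists>a. xp = Some a \<and> y = Some (l a) \<and> (y \<noteq> Some yh \<longrightarrow> \<psi> a xh = f)"
    using shD4[OF sh w3 w2(2)] by blast
  have "y' = Some (l x)" using bspec[OF all in1] e by auto
  moreover have "y' \<noteq> Some ye" using shD2[OF sh w3 in1] e by simp
  ultimately show ?thesis using lp e by auto
qed

lemma lt_paths_dom: "lt_ok D lt d \<Longrightarrow> p \<in> lt_paths lt \<Longrightarrow> (a,b) \<in> set p \<Longrightarrow> a \<in> D"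
  by (induction D lt d arbitrary: p rule: lt_ok.induct) auto

lemma card_frsh_mono: "frsh H (ws @ ws') \<subseteq> frsh H ws"
proof -
  have "lab_ex ws \<subseteq> lab_ex (ws@ws')" unfolding lab_ex_def by (intro image_mono) auto
  then show ?thesis unfolding frsh_def by auto
qed


lemma lab_ex_cons: "lab_ex (z#ws) = insert ((\<lambda>(xp, e, y, f). (xp, y)) z) (lab_ex ws)"
  by (simp add: lab_ex_def)

lemma prs_cons: "prs ws \<subseteq> prs (z # ws)"
  unfolding prs_def lab_ex_cons by blast

lemma prs_in: "(Some a, e, Some b, f) \<in> set ws \<Longrightarrow> (a, b) \<in> prs ws"
  unfolding prs_def lab_ex_def by (auto intro: rev_image_eqI)

lemma lab_ex_in: "(Some a, e, Some b, f) \<in> set ws \<Longrightarrow> (Some a, Some b) \<in> lab_ex ws"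
  unfolding lab_ex_def by (auto intro: rev_image_eqI)

lemma main:
  fixes H :: "('x \<times> 'y::finite) set"
  assumes sh: "dff_shattered TT H t h"
  shows "dff_walk t ws s \<Longrightarrow> d \<le> (h - length ws) - card (frsh H ws) \<Longrightarrow>
    \<exists>lt. lt_ok (DtO_dom H) lt d \<and> (\<forall>p\<in>lt_paths lt. \<exists>ws' u. dff_walk s ws' u \<and> dff_is_leaf u \<and> set p \<subseteq> prs ws')"
proof (induction s arbitrary: ws d)
  case (DNode y f xo c)
  note w = DNode.prems(1)
  have tree: "dff_tree t" using shD1[OF sh] .
  show ?case
  proof (cases "\<forall>e. c e = None")
    case True
    hence leaf: "dff_is_leaf (DNode y f xo c)" by (simp add: dff_is_leaf_def)
    have "length ws = h" using shD5[OF sh w leaf] .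
    hence "d = 0" using DNode.prems(2) by simp
    have "dff_walk (DNode y f xo c) [] (DNode y f xo c)" by (rule walk_nil)
    then have "\<forall>p\<in>lt_paths LLeaf. \<exists>ws' u. dff_walk (DNode y f xo c) ws' u \<and> dff_is_leaf u \<and> set p \<subseteq> prs ws'"
      using leaf by (simp; blast)
    moreover have "lt_ok (DtO_dom H) LLeaf d" using \<open>d = 0\<close> by simp
    ultimately show ?thesis by blast
  next
    case False
    hence nl: "\<not> dff_is_leaf (DNode y f xo c)" by (simp add: dff_is_leaf_def)
    have "xo = None \<longleftrightarrow> (\<forall>e. c e = None)"
      using conjunct1[OF conjunct2[OF tree[unfolded dff_tree_def]], rule_format, OF w] .
    with False obtain x where xo: "xo = Some x" by auto
    have w': "dff_walk t ws (DNode y f (Some x) c)" using w xo by simp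
    have ylab_ch: "\<exists>l \<psi>. (l,\<psi>) \<in> TH TT H \<and> ylab ch = Some (l x) \<and> ylab ch \<noteq> Some (snd e)"
      if "c e = Some ch" for e ch
      using child_label[OF sh w'] that by (cases ch) auto
    have eq3: "(\<lambda>(a,b). (Some a, Some b)) ` {e. c e \<noteq> None}
          = (\<lambda>(a,b). (Some a, Some b)) ` H \<union> lab_ex ws" using shD3[OF sh w nl] .
    have edge: "\<exists>ch. c (a,b) = Some ch"
      if "(Some a, Some b) \<in> (\<lambda>(a,b). (Some a, Some b)) ` H \<union> lab_ex ws" for a b
    proof -
      have "(Some a, Some b) \<in> (\<lambda>(a,b). (Some a, Some b)) ` {e. c e \<noteq> None}" using that eq3 by simp
      then obtain e where "e \<in> {e. c e \<noteq> None}" "(Some a, Some b) = (\<lambda>(a,b). (Some a, Some b)) e"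
        by (rule imageE)
      then show ?thesis by (cases e) auto
    qed
    have xD: "x \<in> DtO_dom H"
    proof (rule ccontr)
      assume "x \<notin> DtO_dom H"
      then have "x \<in> fst ` H" by (simp add: DtO_dom_def hist_X_def)
      then obtain y0 where xy: "(x, y0) \<in> H" by force
      then have "(Some x, Some y0) \<in> (\<lambda>(a,b). (Some a, Some b)) ` H \<union> lab_ex ws"
        by (auto intro: rev_image_eqI)
      then obtain ch where "c (x, y0) = Some ch" using edge by blast
      from ylab_ch[OF this] obtain l \<psi> where "(l,\<psi>) \<in> TH TT H" "ylab ch = Some (l x)" "ylab ch \<noteq> Some y0"
        by auto
      moreover have "l x = y0" using calculation(1) xy unfolding TH_def consistent_with_def by auto
      ultimately show False by simp
    qed
    have walkc: "\<exists>y' f' x' c'. ch = DNode y' f' x' c' \<and> dff_walk t (ws@[(Some x,e,y',f')]) ch"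
      if "c e = Some ch" for e ch
      using walk_snoc[OF w'] that by (cases ch) auto
    have fin: "finite (frsh H ws')" for ws' by simp
    show ?thesis
    proof (cases d)
      case 0
      obtain ws' u where "dff_walk (DNode y f xo c) ws' u" "dff_is_leaf u" using leaf_exists by blast
      then have "\<forall>p\<in>lt_paths LLeaf. \<exists>ws' u. dff_walk (DNode y f xo c) ws' u \<and> dff_is_leaf u \<and> set p \<subseteq> prs ws'"
        by (simp; blast)
      moreover have "lt_ok (DtO_dom H) LLeaf d" using 0 by simp
      ultimately show ?thesis by blast
    next
      case (Suc d')
      show ?thesis
      proof (cases "\<exists>e1 e2 ch1 ch2 a1 a2. c e1 = Some ch1 \<and> c e2 = Some ch2 \<and> ylab ch1 = Some a1 \<and> ylab ch2 = Some a2 \<and> a1 \<noteq> a2")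
        case True
        then obtain e1 e2 ch1 ch2 a1 a2 where br: "c e1 = Some ch1" "c e2 = Some ch2" "ylab ch1 = Some a1"
          "ylab ch2 = Some a2" "a1 \<noteq> a2" by blast
        have sub: "\<exists>lt. lt_ok (DtO_dom H) lt d' \<and>
             (\<forall>p\<in>lt_paths lt. \<exists>ws' u. dff_walk (DNode y f xo c) ws' u \<and> dff_is_leaf u \<and> set ((x, a) # p) \<subseteq> prs ws')"
          if ce: "c e = Some ch" and ya: "ylab ch = Some a" for e ch a
        proof -
          obtain y' f' x' c' where chd: "ch = DNode y' f' x' c'" and
            w1: "dff_walk t (ws@[(Some x,e,y',f')]) ch" using walkc[OF ce] by blast
          have y': "y' = Some a" using ya chd by simp
          have cm: "card (frsh H (ws@[(Some x,e,y',f')])) \<le> card (frsh H ws)"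
            by (rule card_mono[OF fin card_frsh_mono])
          have dd: "d' \<le> (h - length (ws@[(Some x,e,y',f')])) - card (frsh H (ws@[(Some x,e,y',f')]))"
            using DNode.prems(2) Suc cm by simp
          have rc: "c e \<in> range c" by simp
          have so: "ch \<in> set_option (c e)" using ce by simp
          obtain lt where lt: "lt_ok (DtO_dom H) lt d'" and
            pp: "\<forall>p\<in>lt_paths lt. \<exists>ws' u. dff_walk ch ws' u \<and> dff_is_leaf u \<and> set p \<subseteq> prs ws'"
            using DNode.IH[OF rc so w1 dd] by blast
          have "\<exists>ws' u. dff_walk (DNode y f xo c) ws' u \<and> dff_is_leaf u \<and> set ((x, a) # p) \<subseteq> prs ws'"
            if pin: "p \<in> lt_paths lt" for p
          proof -
            obtain ws' u where a1: "dff_walk ch ws' u" "dff_is_leaf u" "set p \<subseteq> prs ws'" using pp pin by blast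
            have "dff_walk (DNode y f xo c) ((xo, e, y', f') # ws') u"
              using a1(1) ce chd by (simp add: dff_walk.walk_cons)
            moreover have "(x, a) \<in> prs ((xo, e, y', f') # ws')"
              by (rule prs_in[of x e a f']) (simp add: xo y')
            moreover have "set p \<subseteq> prs ((xo, e, y', f') # ws')" using a1(3) prs_cons by blast
            ultimately show ?thesis using a1(2) by auto
          qed
          then show ?thesis using lt by blast
        qed
        obtain lt1 where lt1: "lt_ok (DtO_dom H) lt1 d'" 
          "\<forall>p\<in>lt_paths lt1. \<exists>ws' u. dff_walk (DNode y f xo c) ws' u \<and> dff_is_leaf u \<and> set ((x, a1) # p) \<subseteq> prs ws'"
          using sub[OF br(1) br(3)] by blast
        obtain lt2 where lt2: "lt_ok (DtO_dom H) lt2 d'" 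
          "\<forall>p\<in>lt_paths lt2. \<exists>ws' u. dff_walk (DNode y f xo c) ws' u \<and> dff_is_leaf u \<and> set ((x, a2) # p) \<subseteq> prs ws'"
          using sub[OF br(2) br(4)] by blast
        have "lt_ok (DtO_dom H) (LNode x a1 lt1 a2 lt2) d" using Suc xD br(5) lt1(1) lt2(1) by simp
        moreover have "\<forall>p\<in>lt_paths (LNode x a1 lt1 a2 lt2). \<exists>ws' u. dff_walk (DNode y f xo c) ws' u \<and> dff_is_leaf u \<and> set p \<subseteq> prs ws'"
          using lt1(2) lt2(2) by auto
        ultimately show ?thesis by blast
      next
        case False
        note nb = False
        from nl obtain e ch where ce: "c e = Some ch" by (auto simp: dff_is_leaf_def)
        obtain y' f' x' c' where chd: "ch = DNode y' f' x' c'" and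
          w1: "dff_walk t (ws@[(Some x,e,y',f')]) ch" using walkc[OF ce] by blast
        obtain a where ya: "ylab ch = Some a" using ylab_ch[OF ce] by blast
        have y': "y' = Some a" using ya chd by simp
        have all: "ylab ch2 = Some a" if c2: "c e2 = Some ch2" for e2 ch2
        proof -
          obtain a2 where "ylab ch2 = Some a2" using ylab_ch[OF c2] by blast
          with nb ce c2 ya show ?thesis by blast
        qed
        have notedge: False if ed: "(Some a0, Some a) \<in> (\<lambda>(a,b). (Some a, Some b)) ` H \<union> lab_ex ws" for a0
        proof -
          obtain ch0 where c0: "c (a0, a) = Some ch0" using edge[OF ed] by blast
          have "ylab ch0 = Some a" using all[OF c0] .
          moreover have "ylab ch0 \<noteq> Some a" using ylab_ch[OF c0] by auto
          ultimately show False by simp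
        qed
        have afr: "a \<in> frsh H ws"
          unfolding frsh_def
        proof (intro CollectI conjI allI)
          fix a0 show "(a0, a) \<notin> H"
          proof
            assume "(a0, a) \<in> H"
            then have "(Some a0, Some a) \<in> (\<lambda>(a,b). (Some a, Some b)) ` H" by (rule rev_image_eqI) simp
            then show False using notedge[of a0] by blast
          qed
        next
          fix a0 show "(Some a0, Some a) \<notin> lab_ex ws" using notedge[of a0] by auto
        qed
        have anf: "a \<notin> frsh H (ws@[(Some x,e,y',f')])"
          unfolding frsh_def using lab_ex_in[of x e a f' "ws@[(Some x,e,y',f')]"] y' by auto
        have "frsh H (ws@[(Some x,e,y',f')]) \<subseteq> frsh H ws - {a}" using card_frsh_mono[of H ws "[(Some x,e,y',f')]"] anf by blast
        then have cm: "card (frsh H (ws@[(Some x,e,y',f')])) \<le> card (frsh H ws - {a})"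
          by (rule card_mono[rotated]) simp
        have c1: "card (frsh H ws - {a}) = card (frsh H ws) - 1" using afr fin by simp
        have c2: "card (frsh H ws) \<ge> 1" using afr fin card_0_eq[OF fin] by fastforce
        have dd: "d \<le> (h - length (ws@[(Some x,e,y',f')])) - card (frsh H (ws@[(Some x,e,y',f')]))"
          using DNode.prems(2) Suc cm c1 c2 by simp
        have rc: "c e \<in> range c" by simp
        have so: "ch \<in> set_option (c e)" using ce by simp
        obtain lt where lt: "lt_ok (DtO_dom H) lt d" and
          pp: "\<forall>p\<in>lt_paths lt. \<exists>ws' u. dff_walk ch ws' u \<and> dff_is_leaf u \<and> set p \<subseteq> prs ws'"
          using DNode.IH[OF rc so w1 dd] by blast
        have "\<exists>ws' u. dff_walk (DNode y f xo c) ws' u \<and> dff_is_leaf u \<and> set p \<subseteq> prs ws'"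
          if pin: "p \<in> lt_paths lt" for p
        proof -
          obtain ws' u where a1: "dff_walk ch ws' u" "dff_is_leaf u" "set p \<subseteq> prs ws'" using pp pin by blast
          have "dff_walk (DNode y f xo c) ((xo, e, y', f') # ws') u"
            using a1(1) ce chd by (simp add: dff_walk.walk_cons)
          moreover have "set p \<subseteq> prs ((xo, e, y', f') # ws')" using a1(3) prs_cons by blast
          ultimately show ?thesis using a1(2) by blast
        qed
        then show ?thesis using lt by blast
      qed
    qed
  qed
qed


lemma height_bound:
  fixes H :: "('x \<times> 'y::finite) set"
  assumes sh: "dff_shattered TT H t h"
  shows "enat (h - card {y. \<forall>x. (x,y) \<notin> H}) \<le> Ldim (DtO_dom H) (DtO TT H)"
proof -
  let ?N = "card {y. \<forall>x. (x,y) \<notin> H}"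
  have fr: "frsh H [] = {y. \<forall>x. (x,y) \<notin> H}" by (simp add: frsh_def lab_ex_def)
  have "h - ?N \<le> (h - length []) - card (frsh H [])" using fr by simp
  from main[OF sh walk_nil this] obtain lt where lt: "lt_ok (DtO_dom H) lt (h - ?N)" and
    pp: "\<forall>p\<in>lt_paths lt. \<exists>ws' u. dff_walk t ws' u \<and> dff_is_leaf u \<and> set p \<subseteq> prs ws'"
    by blast
  have "lt_shattered (DtO_dom H) (DtO TT H) lt (h - ?N)"
    unfolding lt_shattered_def
  proof (intro conjI ballI)
    show "lt_ok (DtO_dom H) lt (h - ?N)" by (rule lt)
    fix p assume pin: "p \<in> lt_paths lt"
    obtain ws' u where wu: "dff_walk t ws' u" "dff_is_leaf u" "set p \<subseteq> prs ws'" using pp pin by blast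
    obtain l \<psi> where lp: "(l,\<psi>) \<in> TH TT H" and
      all: "\<forall>(xp, (xh, yh), y, f) \<in> set ws'. \<exists>a. xp = Some a \<and> y = Some (l a) \<and> (y \<noteq> Some yh \<longrightarrow> \<psi> a xh = f)"
      using shD4[OF sh wu(1) wu(2)] by blast
    have "(l,\<psi>) \<in> TT" using lp by (simp add: TH_def)
    then have inD: "restrict l (DtO_dom H) \<in> DtO TT H" unfolding DtO_def by (rule rev_image_eqI) simp
    moreover have "\<forall>(a,b)\<in>set p. restrict l (DtO_dom H) a = b"
    proof (clarify)
      fix a b assume ab: "(a,b) \<in> set p"
      have aD: "a \<in> DtO_dom H" using lt_paths_dom[OF lt pin ab] .
      have "(Some a, Some b) \<in> lab_ex ws'" using ab wu(3) unfolding prs_def by blast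
      then obtain z where zin: "z \<in> set ws'" and zeq: "(\<lambda>(xp, e, y, f). (xp, y)) z = (Some a, Some b)"
        unfolding lab_ex_def by (rule imageE) simp
      obtain e f where z: "z = (Some a, e, Some b, f)" using zeq by (cases z) auto
      have "b = l a" using bspec[OF all zin] z by (cases e) auto
      then show "restrict l (DtO_dom H) a = b" using aD by simp
    qed
    ultimately show "\<exists>f\<in>DtO TT H. \<forall>(x,y)\<in>set p. f x = y" by blast
  qed
  then show ?thesis unfolding Ldim_def by (intro Sup_upper) blast
qed

theorem mainTheorem10:
  fixes \<Phi> :: "('x \<Rightarrow> bool) set"
    and TT :: "('x, 'y::finite) teacher set"
    and H :: "('x \<times> 'y) set"
  assumes "teacher_class \<Phi> TT"
    and "H \<noteq> {}"
    and "TH TT H \<noteq> {}"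
  shows "Ldim (DtO_dom H) (DtO TT H) \<ge> DFFdim TT H - enat (card {y. \<forall>x. (x, y) \<notin> H})"
proof -
  let ?N = "card {y. \<forall>x. (x,y) \<notin> H}"
  let ?S = "{enat h | h. \<exists>t. dff_shattered TT H t h}"
  let ?L = "Ldim (DtO_dom H) (DtO TT H)"
  have D: "DFFdim TT H = Sup ?S" unfolding DFFdim_def by (rule refl)
  show ?thesis
  proof (cases "?S = {}")
    case True
    have "Sup ?S = 0" unfolding True by (simp add: Sup_enat_def)
    then have "DFFdim TT H - enat ?N = 0" using D by simp
    then show ?thesis by simp
  next
    case ne: False
    show ?thesis
    proof (cases "finite ?S")
      case True
      have "Sup ?S = Max ?S" by (subst Sup_enat_def) (rule trans[OF if_not_P[OF ne] if_P[OF True]])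
      moreover have "Max ?S \<in> ?S" using True ne by (rule Max_in)
      ultimately have "Sup ?S \<in> ?S" by (simp only:)
      then obtain h t where st: "Sup ?S = enat h" "dff_shattered TT H t h" by blast
      have "DFFdim TT H - enat ?N = enat (h - ?N)" using st(1) D by simp
      then show ?thesis using height_bound[OF st(2)] by simp
    next
      case False
      have "enat n \<le> ?L" for n
      proof -
        have inf: "infinite {h. \<exists>t. dff_shattered TT H t h}"
        proof
          assume "finite {h. \<exists>t. dff_shattered TT H t h}"
          then have "finite (enat ` {h. \<exists>t. dff_shattered TT H t h})" by simp
          moreover have "enat ` {h. \<exists>t. dff_shattered TT H t h} = ?S" by blast
          ultimately show False using False by simp
        qed
        obtain h where "h \<ge> n + ?N" "h \<in> {h. \<exists>t. dff_shattered TT H t h}"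
          using iffD1[OF infinite_nat_iff_unbounded_le inf, rule_format, of "n + ?N"] by blast
        then obtain t where tt: "dff_shattered TT H t h" "n \<le> h - ?N" by auto
        have "enat n \<le> enat (h - ?N)" using tt(2) by simp
        then show ?thesis using height_bound[OF tt(1)] by (rule order_trans)
      qed
      then have "?L = \<infinity>"
      proof (cases ?L)
        case (enat k)
        then show ?thesis using \<open>\<And>n. enat n \<le> ?L\<close>[of "Suc k"] by simp
      qed simp
      then show ?thesis by simp
    qed
  qed
qed

end
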